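(* Let $A \in \mathbb{R}^{m \times n}$, let $Q \subset \mathbb{R}^m$ be closed and convex such that the collection $\{Q,\mathcal{R}(A)\}$ is boundedly linearly regular, and let $C=\{x \in \mathbb{R}^n : Ax \in Q\}$. Then for every $R>0$ there exists $\gamma>0$ such that for all $x \in \mathbb{R}^n$ with $\|x\|_2\le R$, \[ \operatorname{dist}(x,C) \le \gamma \cdot \operatorname{dist}(Ax, Q). \]
   Context: $\mathcal{R}(A)$ denotes the range of $A$; $\operatorname{dist}$ denotes Euclidean distance to a set. A collection of closed convex sets $C_1,\dots,C_r\subset\mathbb{R}^m$ with nonempty intersection $D=\bigcap_i C_i$ is boundedly linearly regular if for every $R>0$ there is $\gamma>0$ such that $\operatorname{dist}(y,D)^2\le\gamma\sum_{i=1}^r\operatorname{dist}(y,C_i)^2$ for all $y$ with $\|y\|_2\le R$. (In particular bounded linear regularity of $\{Q,\mathcal{R}(A)\}$ includes $Q\cap\mathcal{R}(A)\neq\emptyset$.) *)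

theory Defs
  imports "HOL-Analysis.Analysis"
begin

text \<open>Bounded linear regularity of a finite collection of closed convex sets
  C_1,...,C_r (given as a list), following the paper: the intersection D is
  nonempty, and for every R > 0 there is gamma > 0 with
  dist(y,D)^2 <= gamma * sum_i dist(y,C_i)^2 for all y with norm y <= R.\<close>

definition boundedly_linearly_regular :: "('a::euclidean_space) set list \<Rightarrow> bool" where
  "boundedly_linearly_regular Cs \<longleftrightarrow>
     (\<forall>C\<in>set Cs. closed C \<and> convex C) \<and>
     (\<Inter>(set Cs)) \<noteq> {} \<and>
     (\<forall>R>0. \<exists>\<gamma>>0. \<forall>y. norm y \<le> R \<longrightarrow>
        (infdist y (\<Inter>(set Cs)))\<^sup>2 \<le> \<gamma> * (\<Sum>C\<leftarrow>Cs. (infdist y C)\<^sup>2))"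

end

theory Submission
  imports Defs
begin

lemma right_inv_bounded:
  fixes A :: "real^'n^'m"
  obtains c where "c > 0" "\<And>v. \<exists>p. A *v p = A *v v \<and> norm p \<le> c * norm (A *v v)"
proof -
  have lf: "linear ((*v) A)" by (simp add: matrix_vector_mul_linear)
  obtain g where g: "linear g" "\<forall>v\<in>range ((*v) A). A *v (g v) = v"
    using linear_exists_right_inverse_on[OF lf, of UNIV] by auto
  obtain c where c: "c > 0" "\<And>x. norm (g x) \<le> c * norm x"
    using linear_bounded_pos[OF g(1)] by blast
  show ?thesis
  proof (rule that[OF c(1)])
    fix v
    show "\<exists>p. A *v p = A *v v \<and> norm p \<le> c * norm (A *v v)"
      using g(2) c(2) by (intro exI[of _ "g (A *v v)"]) auto
  qed
qed

theorem lemma3p7: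
  fixes A :: "real^'n^'m" and Q :: "(real^'m) set"
  assumes "closed Q" and "convex Q"
    and "boundedly_linearly_regular [Q, range (\<lambda>x. A *v x)]"
  shows "\<forall>R>0. \<exists>\<gamma>>0. \<forall>x::real^'n. norm x \<le> R \<longrightarrow>
           infdist x {x. A *v x \<in> Q} \<le> \<gamma> * infdist (A *v x) Q"
proof (intro allI impI)
  fix R :: real assume R: "R > 0"
  let ?D = "Q \<inter> range (\<lambda>x. A *v x)"
  have lf: "linear ((*v) A)" by (simp add: matrix_vector_mul_linear)
  obtain B where B: "B > 0" "\<And>x. norm (A *v x) \<le> B * norm x"
    using linear_bounded_pos[OF lf] by blast
  have reg: "?D \<noteq> {}" "\<forall>R>0. \<exists>\<gamma>>0. \<forall>y. norm y \<le> R \<longrightarrow>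
        (infdist y ?D)\<^sup>2 \<le> \<gamma> * ((infdist y Q)\<^sup>2 + (infdist y (range (\<lambda>x. A *v x)))\<^sup>2)"
    using assms(3) unfolding boundedly_linearly_regular_def by (auto simp: Int_commute)
  obtain g where g: "g > 0" "\<And>y. norm y \<le> B * R \<Longrightarrow>
        (infdist y ?D)\<^sup>2 \<le> g * ((infdist y Q)\<^sup>2 + (infdist y (range (\<lambda>x. A *v x)))\<^sup>2)"
    using reg(2) B(1) R by (meson mult_pos_pos)
  obtain c where c: "c > 0" "\<And>v. \<exists>p. A *v p = A *v v \<and> norm p \<le> c * norm (A *v v)"
    using right_inv_bounded by blast
  have clD: "closed ?D"
    using assms(1) closed_subspace[OF linear_subspace_image[OF lf subspace_UNIV]]
    by (simp add: closed_Int image_def)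
  show "\<exists>\<gamma>>0. \<forall>x::real^'n. norm x \<le> R \<longrightarrow>
           infdist x {x. A *v x \<in> Q} \<le> \<gamma> * infdist (A *v x) Q"
  proof (intro exI[of _ "c * sqrt g"] conjI allI impI)
    show "c * sqrt g > 0" using c g by simp
    fix x :: "real^'n" assume x: "norm x \<le> R"
    let ?y = "A *v x"
    have ny: "norm ?y \<le> B * R"
      using B(2)[of x] x B(1) by (meson mult_left_mono less_imp_le order_trans)
    have "infdist ?y (range (\<lambda>x. A *v x)) = 0" by (simp add: infdist_zero)
    with g(2)[OF ny] have sq: "(infdist ?y ?D)\<^sup>2 \<le> g * (infdist ?y Q)\<^sup>2" by simp
    have hD: "infdist ?y ?D \<le> sqrt g * infdist ?y Q"
    proof -
      have "infdist ?y ?D = sqrt ((infdist ?y ?D)\<^sup>2)" by (simp add: infdist_nonneg)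
      also have "\<dots> \<le> sqrt (g * (infdist ?y Q)\<^sup>2)" using sq real_sqrt_le_mono by blast
      also have "\<dots> = sqrt g * infdist ?y Q" by (simp add: real_sqrt_mult infdist_nonneg)
      finally show ?thesis .
    qed
    obtain z where z: "z \<in> ?D" "infdist ?y ?D = dist ?y z"
      using infdist_attains_inf[OF clD reg(1)] by blast
    then obtain w where w: "z = A *v w" "z \<in> Q" by auto
    obtain p where p: "A *v p = A *v (x - w)" "norm p \<le> c * norm (A *v (x - w))"
      using c(2) by blast
    have u: "x - p \<in> {x. A *v x \<in> Q}"
      using p(1) w by (simp add: matrix_vector_mult_diff_distrib)
    have "infdist x {x. A *v x \<in> Q} \<le> dist x (x - p)" using infdist_le[OF u] .
    also have "\<dots> = norm p" by (simp add: dist_norm)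
    also have "\<dots> \<le> c * norm (?y - z)"
      using p(2) w by (simp add: matrix_vector_mult_diff_distrib)
    also have "\<dots> = c * infdist ?y ?D" using z by (simp add: dist_norm)
    also have "\<dots> \<le> c * (sqrt g * infdist ?y Q)" using hD c(1) by simp
    finally show "infdist x {x. A *v x \<in> Q} \<le> c * sqrt g * infdist ?y Q" by (simp add: mult.assoc)
  qed
qed

end
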